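(* Let $H$ be a finite simple graph with $n=|V(H)|$ vertices, let the vertex set of $H$ be partitioned into anticliques, and let $m'_A$ denote the number of non-edges of $H$ lying inside these anticliques (i.e. pairs of distinct vertices belonging to the same anticlique of the partition). If $m'$ is the number of all non-edges of $H$, then $$n + m'_A \leq \rho(H) \leq n+m'.$$
   Context: All graphs are finite and simple. A coloring means a proper vertex coloring; an induced subgraph is rainbow if all its vertices have pairwise different colors. For a graph $H$, $\rho(H)$ is the least number $m$ such that there exists a graph $G$ on $m$ vertices such that every proper vertex coloring of $G$ contains a rainbow induced subgraph isomorphic to $H$. An anticlique is a set of pairwise non-adjacent vertices; a non-edge is an unordered pair of distinct non-adjacent vertices. *)

theory Defs
  imports Main "HOL-Library.Disjoint_Sets"
begin

definition simple_graph :: "'a set \<Rightarrow> ('a \<Rightarrow> 'a \<Rightarrow> bool) \<Rightarrow> bool" where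
  "simple_graph V E \<longleftrightarrow> finite V \<and> (\<forall>x y. E x y \<longrightarrow> x \<in> V \<and> y \<in> V)
     \<and> (\<forall>x y. E x y \<longrightarrow> E y x) \<and> (\<forall>x. \<not> E x x)"

definition proper_coloring :: "'b set \<Rightarrow> ('b \<Rightarrow> 'b \<Rightarrow> bool) \<Rightarrow> ('b \<Rightarrow> nat) \<Rightarrow> bool" where
  "proper_coloring W F c \<longleftrightarrow> (\<forall>u\<in>W. \<forall>v\<in>W. F u v \<longrightarrow> c u \<noteq> c v)"

definition induced_embedding ::
  "'a set \<Rightarrow> ('a \<Rightarrow> 'a \<Rightarrow> bool) \<Rightarrow> 'b set \<Rightarrow> ('b \<Rightarrow> 'b \<Rightarrow> bool) \<Rightarrow> ('a \<Rightarrow> 'b) \<Rightarrow> bool" where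
  "induced_embedding V E W F f \<longleftrightarrow> f ` V \<subseteq> W \<and> inj_on f V
     \<and> (\<forall>x\<in>V. \<forall>y\<in>V. E x y \<longleftrightarrow> F (f x) (f y))"

definition forces_rainbow ::
  "'a set \<Rightarrow> ('a \<Rightarrow> 'a \<Rightarrow> bool) \<Rightarrow> 'b set \<Rightarrow> ('b \<Rightarrow> 'b \<Rightarrow> bool) \<Rightarrow> bool" where
  "forces_rainbow V E W F \<longleftrightarrow>
     (\<forall>c. proper_coloring W F c \<longrightarrow>
        (\<exists>f. induced_embedding V E W F f \<and> inj_on (c \<circ> f) V))"

text \<open>rho(H): least m such that some simple graph on m vertices forces a rainbow
induced copy of H. Graphs on m vertices are taken w.l.o.g. on vertex set {0..<m}.\<close>
definition rho :: "'a set \<Rightarrow> ('a \<Rightarrow> 'a \<Rightarrow> bool) \<Rightarrow> nat" where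
  "rho V E = (LEAST m. \<exists>F :: nat \<Rightarrow> nat \<Rightarrow> bool.
      simple_graph {0..<m} F \<and> forces_rainbow V E {0..<m} F)"

definition non_edges :: "'a set \<Rightarrow> ('a \<Rightarrow> 'a \<Rightarrow> bool) \<Rightarrow> 'a set set" where
  "non_edges V E = {{x, y} | x y. x \<in> V \<and> y \<in> V \<and> x \<noteq> y \<and> \<not> E x y}"

definition block_pairs :: "'a set set \<Rightarrow> 'a set set" where
  "block_pairs P = {{x, y} | x y. x \<noteq> y \<and> (\<exists>B\<in>P. x \<in> B \<and> y \<in> B)}"

definition anticlique :: "('a \<Rightarrow> 'a \<Rightarrow> bool) \<Rightarrow> 'a set \<Rightarrow> bool" where
  "anticlique E B \<longleftrightarrow> (\<forall>x\<in>B. \<forall>y\<in>B. \<not> E x y)"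

end

theory Submission
  imports Defs
begin

lemma transport:
  fixes W :: "'b set" and F :: "'b \<Rightarrow> 'b \<Rightarrow> bool"
  assumes sg: "simple_graph W F" and fr: "forces_rainbow V E W F"
  shows "\<exists>F'::nat\<Rightarrow>nat\<Rightarrow>bool. simple_graph {0..<card W} F' \<and> forces_rainbow V E {0..<card W} F'"
proof -
  have fin: "finite W" using sg by (simp add: simple_graph_def)
  obtain h where h: "bij_betw h {0..<card W} W" using ex_bij_betw_nat_finite[OF fin] by blast
  define N where "N = {0..<card W}"
  define hi where "hi = inv_into N h"
  have hi: "bij_betw hi W N" unfolding hi_def N_def using h bij_betw_inv_into by blast
  have hhi: "\<And>w. w \<in> W \<Longrightarrow> h (hi w) = w" unfolding hi_def N_def using h bij_betw_inv_into_right by fastforce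
  define F' where "F' a b = (a \<in> N \<and> b \<in> N \<and> F (h a) (h b))" for a b
  have "simple_graph N F'"
    using sg unfolding simple_graph_def F'_def N_def by auto
  moreover have "forces_rainbow V E N F'"
    unfolding forces_rainbow_def
  proof (intro allI impI)
    fix c' assume pc: "proper_coloring N F' c'"
    define c where "c = c' \<circ> hi"
    have "proper_coloring W F c"
      unfolding proper_coloring_def
    proof (intro ballI impI)
      fix u v assume uv: "u \<in> W" "v \<in> W" "F u v"
      have "hi u \<in> N" "hi v \<in> N" using hi uv bij_betwE by blast+
      moreover have "F' (hi u) (hi v)" unfolding F'_def using uv hhi \<open>hi u \<in> N\<close> \<open>hi v \<in> N\<close> by simp
      ultimately show "c u \<noteq> c v" using pc unfolding proper_coloring_def c_def by simp
    qed
    then obtain f where emb: "induced_embedding V E W F f" and inj: "inj_on (c \<circ> f) V"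
      using fr unfolding forces_rainbow_def by blast
    define f' where "f' = hi \<circ> f"
    have fV: "f ` V \<subseteq> W" and injf: "inj_on f V" and ee: "\<forall>x\<in>V. \<forall>y\<in>V. E x y \<longleftrightarrow> F (f x) (f y)"
      using emb unfolding induced_embedding_def by auto
    have "f' ` V \<subseteq> N" unfolding f'_def using fV hi bij_betwE by fastforce
    moreover have "inj_on f' V" unfolding f'_def
      by (rule comp_inj_on[OF injf inj_on_subset[OF bij_betw_imp_inj_on[OF hi] fV]])
    moreover have "\<forall>x\<in>V. \<forall>y\<in>V. E x y \<longleftrightarrow> F' (f' x) (f' y)"
    proof (intro ballI)
      fix x y assume "x \<in> V" "y \<in> V"
      then have "f x \<in> W" "f y \<in> W" using fV by auto
      then have "hi (f x) \<in> N" "hi (f y) \<in> N" using hi bij_betwE by blast+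
      then show "E x y \<longleftrightarrow> F' (f' x) (f' y)"
        unfolding F'_def f'_def using ee \<open>x \<in> V\<close> \<open>y \<in> V\<close> hhi \<open>f x \<in> W\<close> \<open>f y \<in> W\<close> by simp
    qed
    ultimately have "induced_embedding V E N F' f'" unfolding induced_embedding_def by blast
    moreover have "inj_on (c' \<circ> f') V" using inj unfolding c_def f'_def by (simp add: comp_assoc)
    ultimately show "\<exists>f. induced_embedding V E N F' f \<and> inj_on (c' \<circ> f) V" by blast
  qed
  ultimately show ?thesis unfolding N_def by blast
qed

lemma rho_le:
  fixes W :: "'b set" and F :: "'b \<Rightarrow> 'b \<Rightarrow> bool"
  assumes sg: "simple_graph W F" and fr: "forces_rainbow V E W F"
  shows "rho V E \<le> card W"
  using transport[OF sg fr] unfolding rho_def by (rule Least_le)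

lemma greedy:
  fixes F :: "'b \<Rightarrow> 'b \<Rightarrow> bool"
  assumes irr: "\<forall>x. \<not> F x x"
  shows "finite W \<Longrightarrow> \<exists>c. proper_coloring W F c \<and>
     (\<forall>i S. S \<subseteq> {w\<in>W. i \<le> c w} \<longrightarrow> anticlique F S \<longrightarrow> card S \<le> card {w\<in>W. c w = i})"
proof (induction "card W" arbitrary: W rule: less_induct)
  case less
  show ?case
  proof (cases "W = {}")
    case True
    then show ?thesis by (auto simp: proper_coloring_def)
  next
    case False
    define A where "A = {S. S \<subseteq> W \<and> anticlique F S}"
    have finA: "finite A" unfolding A_def using less.prems by auto
    have "{} \<in> A" unfolding A_def anticlique_def by auto
    define M where "M = Max (card ` A)"
    have "M \<in> card ` A" unfolding M_def using finA \<open>{} \<in> A\<close> by (intro Max_in) auto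
    then obtain I where IA: "I \<in> A" and cI: "card I = M" by auto
    have maxI: "\<And>S. S \<in> A \<Longrightarrow> card S \<le> card I" unfolding cI M_def using finA by auto
    obtain w where "w \<in> W" using False by auto
    then have "{w} \<in> A" unfolding A_def anticlique_def using irr by auto
    then have "card I \<ge> 1" using maxI[of "{w}"] by simp
    then have "I \<noteq> {}" by auto
    have IW: "I \<subseteq> W" and Ianti: "anticlique F I" using IA unfolding A_def by auto
    have "card (W - I) < card W"
      using less.prems IW \<open>I \<noteq> {}\<close> by (intro psubset_card_mono) auto
    then obtain c' where pc': "proper_coloring (W - I) F c'" and
      pr': "\<forall>i S. S \<subseteq> {w\<in>W - I. i \<le> c' w} \<longrightarrow> anticlique F S \<longrightarrow> card S \<le> card {w\<in>W - I. c' w = i}"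
      using less.hyps[of "W - I"] less.prems by auto
    define c where "c w = (if w \<in> I then 0 else Suc (c' w))" for w
    have "proper_coloring W F c"
      unfolding proper_coloring_def
    proof (intro ballI impI)
      fix u v assume uv: "u \<in> W" "v \<in> W" "F u v"
      show "c u \<noteq> c v"
      proof (cases "u \<in> I")
        case True
        then show ?thesis using Ianti uv unfolding c_def anticlique_def by auto
      next
        case False
        then show ?thesis using pc' uv unfolding c_def proper_coloring_def by auto
      qed
    qed
    moreover have "\<forall>i S. S \<subseteq> {w\<in>W. i \<le> c w} \<longrightarrow> anticlique F S \<longrightarrow> card S \<le> card {w\<in>W. c w = i}"
    proof (intro allI impI)
      fix i S assume S: "S \<subseteq> {w\<in>W. i \<le> c w}" "anticlique F S"
      show "card S \<le> card {w\<in>W. c w = i}"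
      proof (cases i)
        case 0
        have "{w\<in>W. c w = i} = I" using 0 IW unfolding c_def by auto
        moreover have "S \<in> A" using S unfolding A_def by auto
        ultimately show ?thesis using maxI by simp
      next
        case (Suc j)
        have "S \<subseteq> {w\<in>W - I. j \<le> c' w}" using S Suc unfolding c_def by (auto split: if_splits)
        then have "card S \<le> card {w\<in>W - I. c' w = j}" using pr' S by blast
        moreover have "{w\<in>W - I. c' w = j} = {w\<in>W. c w = i}" using Suc unfolding c_def by auto
        ultimately show ?thesis by simp
      qed
    qed
    ultimately show ?thesis by blast
  qed
qed


lemma lower:
  fixes W :: "'b set" and F :: "'b \<Rightarrow> 'b \<Rightarrow> bool"
  assumes sg: "simple_graph V E" and part: "partition_on V P" and anti: "\<forall>B\<in>P. anticlique E B"
    and fW: "finite W" and irr: "\<forall>x. \<not> F x x" and fr: "forces_rainbow V E W F"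
  shows "card V + card (block_pairs P) \<le> card W"
proof -
  obtain c where pc: "proper_coloring W F c" and
    cprop: "\<forall>i S. S \<subseteq> {w\<in>W. i \<le> c w} \<longrightarrow> anticlique F S \<longrightarrow> card S \<le> card {w\<in>W. c w = i}"
    using greedy[of F W, OF irr fW] by blast
  obtain f where emb: "induced_embedding V E W F f" and inj: "inj_on (c \<circ> f) V"
    using fr pc unfolding forces_rainbow_def by blast
  have fV: "f ` V \<subseteq> W" and injf: "inj_on f V" and ee: "\<forall>x\<in>V. \<forall>y\<in>V. E x y \<longleftrightarrow> F (f x) (f y)"
    using emb unfolding induced_embedding_def by auto
  define \<phi> where "\<phi> = c \<circ> f"
  have phinj: "x = y" if "x \<in> V" "y \<in> V" "\<phi> x = \<phi> y" for x y
  proof -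
    have "(c \<circ> f) x = (c \<circ> f) y" using that(3) unfolding \<phi>_def .
    then show "x = y" by (rule inj_onD[OF inj _ that(1) that(2)])
  qed
  define sb where "sb x y = (\<exists>B\<in>P. x \<in> B \<and> y \<in> B)" for x y
  have finV: "finite V" using sg by (simp add: simple_graph_def)
  have UP: "\<Union>P = V" and disj: "disjoint P" using part unfolding partition_on_def by auto
  have blk: "\<And>B. B \<in> P \<Longrightarrow> B \<subseteq> V" using UP by auto
  have sbrefl: "\<And>x. x \<in> V \<Longrightarrow> sb x x" unfolding sb_def using UP by auto
  have sbtr: "\<And>x y z. sb x y \<Longrightarrow> sb x z \<Longrightarrow> \<exists>B\<in>P. y \<in> B \<and> z \<in> B"
  proof -
    fix x y z assume "sb x y" "sb x z"
    then obtain B1 B2 where "B1 \<in> P" "B2 \<in> P" "x \<in> B1" "y \<in> B1" "x \<in> B2" "z \<in> B2"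
      unfolding sb_def by blast
    moreover have "B1 = B2"
    proof (rule ccontr)
      assume "B1 \<noteq> B2"
      then have "disjnt B1 B2" by (rule pairwiseD[OF disj \<open>B1 \<in> P\<close> \<open>B2 \<in> P\<close>])
      then show False using \<open>x \<in> B1\<close> \<open>x \<in> B2\<close> unfolding disjnt_def by blast
    qed
    ultimately show "\<exists>B\<in>P. y \<in> B \<and> z \<in> B" by blast
  qed
  define Q where "Q = {(x,y). x \<in> V \<and> y \<in> V \<and> sb x y \<and> \<phi> x < \<phi> y}"
  define D where "D = Sigma V (\<lambda>x. {y\<in>V. sb x y \<and> \<phi> x \<le> \<phi> y})"
  have finQ: "finite Q"
    by (rule finite_subset[of _ "V \<times> V"]) (auto simp: Q_def finV)
  have "block_pairs P \<subseteq> (\<lambda>(x,y). {x,y}) ` Q"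
  proof
    fix e assume "e \<in> block_pairs P"
    then obtain x y B where e: "e = {x,y}" "x \<noteq> y" "B \<in> P" "x \<in> B" "y \<in> B"
      unfolding block_pairs_def by blast
    then have xy: "x \<in> V" "y \<in> V" "sb x y" "sb y x" using blk unfolding sb_def by blast+
    then have "\<phi> x \<noteq> \<phi> y" using phinj e(2) by blast
    then have "(x,y) \<in> Q \<or> (y,x) \<in> Q" using xy unfolding Q_def by auto
    then show "e \<in> (\<lambda>(x,y). {x,y}) ` Q" using e(1) by (auto simp: insert_commute)
  qed
  then have "card (block_pairs P) \<le> card ((\<lambda>(x,y). {x,y}) ` Q)"
    by (rule card_mono[OF finite_imageI[OF finQ]])
  moreover have "card ((\<lambda>(x,y). {x,y}) ` Q) \<le> card Q" by (rule card_image_le[OF finQ])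
  ultimately have c1: "card (block_pairs P) \<le> card Q" by linarith
  have Deq: "D = Q \<union> (\<lambda>x. (x,x)) ` V"
  proof
    show "D \<subseteq> Q \<union> (\<lambda>x. (x,x)) ` V"
    proof
      fix p assume "p \<in> D"
      then obtain x y where p: "p = (x,y)" "x \<in> V" "y \<in> V" "sb x y" "\<phi> x \<le> \<phi> y"
        unfolding D_def by blast
      show "p \<in> Q \<union> (\<lambda>x. (x,x)) ` V"
      proof (cases "\<phi> x = \<phi> y")
        case True
        then have "x = y" using phinj p by blast
        then show ?thesis using p by auto
      next
        case False
        then show ?thesis using p unfolding Q_def by auto
      qed
    qed
    show "Q \<union> (\<lambda>x. (x,x)) ` V \<subseteq> D" unfolding Q_def D_def using sbrefl by auto
  qed
  have "Q \<inter> (\<lambda>x. (x,x)) ` V = {}" unfolding Q_def by auto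
  then have c2: "card D = card Q + card V"
    using Deq finQ finV by (simp add: card_Un_disjoint card_image inj_on_def)
  have c3: "card D = (\<Sum>x\<in>V. card {y\<in>V. sb x y \<and> \<phi> x \<le> \<phi> y})"
    unfolding D_def using finV by simp
  have c4: "\<And>x. x \<in> V \<Longrightarrow> card {y\<in>V. sb x y \<and> \<phi> x \<le> \<phi> y} \<le> card {w\<in>W. c w = \<phi> x}"
  proof -
    fix x assume xV: "x \<in> V"
    define T where "T = {y\<in>V. sb x y \<and> \<phi> x \<le> \<phi> y}"
    have "T \<subseteq> V" unfolding T_def by auto
    have cT: "card (f ` T) = card T"
      by (rule card_image[OF inj_on_subset[OF injf \<open>T \<subseteq> V\<close>]])
    have sub: "f ` T \<subseteq> {w\<in>W. \<phi> x \<le> c w}" using fV unfolding T_def \<phi>_def by auto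
    have ac: "anticlique F (f ` T)"
      unfolding anticlique_def
    proof (intro ballI)
      fix a b assume "a \<in> f ` T" "b \<in> f ` T"
      then obtain y z where yz: "a = f y" "b = f z" "y \<in> T" "z \<in> T" by blast
      then obtain B where "B \<in> P" "y \<in> B" "z \<in> B" using sbtr unfolding T_def by blast
      then have "\<not> E y z" using anti unfolding anticlique_def by blast
      then show "\<not> F a b" using ee yz unfolding T_def by blast
    qed
    show "card T \<le> card {w\<in>W. c w = \<phi> x}" using cprop[rule_format, OF sub ac] cT by simp
  qed
  have c5: "(\<Sum>x\<in>V. card {w\<in>W. c w = \<phi> x}) = card (\<Union>x\<in>V. {w\<in>W. c w = \<phi> x})"
    using finV fW phinj by (intro card_UN_disjoint[symmetric]) auto
  have c6: "card (\<Union>x\<in>V. {w\<in>W. c w = \<phi> x}) \<le> card W"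
    using fW by (intro card_mono) auto
  have "card V + card (block_pairs P) \<le> card D" using c1 c2 by simp
  also have "\<dots> \<le> (\<Sum>x\<in>V. card {w\<in>W. c w = \<phi> x})" unfolding c3 using c4 by (rule sum_mono)
  finally show ?thesis using c5 c6 by simp
qed


lemma upper:
  fixes V :: "'a set" and E :: "'a \<Rightarrow> 'a \<Rightarrow> bool"
  assumes sg: "simple_graph V E"
  shows "\<exists>(W::('a \<times> nat) set) F. simple_graph W F \<and> forces_rainbow V E W F
          \<and> card W \<le> card V + card (non_edges V E)"
proof -
  have finV: "finite V" using sg by (simp add: simple_graph_def)
  have Esym: "\<And>x y. E x y \<Longrightarrow> E y x" and Eirr: "\<And>x. \<not> E x x"
    and EV: "\<And>x y. E x y \<Longrightarrow> x \<in> V \<and> y \<in> V"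
    using sg unfolding simple_graph_def by blast+
  obtain g where g: "bij_betw g V {0..<card V}" using ex_bij_betw_finite_nat[OF finV] by blast
  have ginj: "inj_on g V" using g bij_betw_imp_inj_on by blast
  have glt: "\<And>v. v \<in> V \<Longrightarrow> g v < card V" using g bij_betwE by fastforce
  define N where "N v = {u\<in>V. g u < g v \<and> \<not> E u v}" for v
  define d where "d v = card (N v)" for v
  define W where "W = Sigma V (\<lambda>v. {0..d v})"
  define F where "F p q = (p \<in> W \<and> q \<in> W \<and> ((fst p = fst q \<and> snd p \<noteq> snd q) \<or> E (fst p) (fst q)))" for p q
  have finN: "\<And>v. finite (N v)" unfolding N_def using finV by auto
  have finW: "finite W" unfolding W_def using finV by auto
  have "card W = (\<Sum>v\<in>V. Suc (d v))" unfolding W_def using finV by simp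
  also have "\<dots> = card V + (\<Sum>v\<in>V. d v)" unfolding Suc_eq_plus1 sum.distrib by simp
  also have "(\<Sum>v\<in>V. d v) = card (Sigma V N)" unfolding d_def using finV finN by simp
  also have "card (Sigma V N) \<le> card (non_edges V E)"
  proof (rule card_inj_on_le)
    show "inj_on (\<lambda>(v,u). {u,v}) (Sigma V N)"
    proof (rule inj_onI)
      fix p q assume p: "p \<in> Sigma V N" and q: "q \<in> Sigma V N"
        and eq: "(\<lambda>(v,u). {u,v}) p = (\<lambda>(v,u). {u,v}) q"
      obtain v u v' u' where pq: "p = (v,u)" "q = (v',u')" by (cases p, cases q) auto
      have lt: "g u < g v" "g u' < g v'" using p q pq unfolding N_def by auto
      have "{u,v} = {u',v'}" using eq pq by simp
      then have "(u = u' \<and> v = v') \<or> (u = v' \<and> v = u')" by (simp add: doubleton_eq_iff)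
      then show "p = q" using lt pq by auto
    qed
    show "(\<lambda>(v,u). {u,v}) ` Sigma V N \<subseteq> non_edges V E"
    proof
      fix e assume "e \<in> (\<lambda>(v,u). {u,v}) ` Sigma V N"
      then obtain v u where vu: "e = {u,v}" "v \<in> V" "u \<in> V" "g u < g v" "\<not> E u v"
        unfolding N_def by auto
      then have "u \<noteq> v" by auto
      then show "e \<in> non_edges V E" unfolding non_edges_def using vu by blast
    qed
    show "finite (non_edges V E)"
    proof (rule finite_subset[of _ "Pow V"])
      show "non_edges V E \<subseteq> Pow V" unfolding non_edges_def by auto
    qed (use finV in auto)
  qed
  finally have cardW: "card W \<le> card V + card (non_edges V E)" by simp
  have sgW: "simple_graph W F"
    unfolding simple_graph_def F_def using finW Esym Eirr by auto
  have "forces_rainbow V E W F"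
    unfolding forces_rainbow_def
  proof (intro allI impI)
    fix c assume pc: "proper_coloring W F c"
    have step: "\<exists>k. (\<forall>v\<in>V. g v < t \<longrightarrow> k v \<le> d v) \<and> inj_on (\<lambda>v. c (v, k v)) {v\<in>V. g v < t}" for t
    proof (induction t)
      case 0
      show ?case by (rule exI[of _ "\<lambda>_. 0"]) auto
    next
      case (Suc t)
      then obtain k where kb: "\<forall>v\<in>V. g v < t \<longrightarrow> k v \<le> d v"
        and ki: "inj_on (\<lambda>v. c (v, k v)) {v\<in>V. g v < t}" by blast
      show ?case
      proof (cases "\<exists>v\<in>V. g v = t")
        case False
        then have "{v\<in>V. g v < Suc t} = {v\<in>V. g v < t}" by (auto simp: less_Suc_eq)
        moreover have "\<forall>w\<in>V. g w < Suc t \<longrightarrow> k w \<le> d w" using kb False by (auto simp: less_Suc_eq)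
        ultimately show ?thesis using ki by (intro exI[of _ k]) simp
      next
        case True
        then obtain v where vV: "v \<in> V" and gv: "g v = t" by blast
        have colinj: "inj_on (\<lambda>j. c (v,j)) {0..d v}"
        proof (rule inj_onI)
          fix i j assume ij: "i \<in> {0..d v}" "j \<in> {0..d v}" "c (v,i) = c (v,j)"
          show "i = j"
          proof (rule ccontr)
            assume "i \<noteq> j"
            then have "F (v,i) (v,j)" unfolding F_def W_def using ij vV by auto
            moreover have "(v,i) \<in> W" "(v,j) \<in> W" unfolding W_def using ij vV by auto
            ultimately have "c (v,i) \<noteq> c (v,j)" using pc unfolding proper_coloring_def by blast
            then show False using ij by simp
          qed
        qed
        have c1: "card ((\<lambda>j. c (v,j)) ` {0..d v}) = Suc (d v)"
          using card_image[OF colinj] by simp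
        have c2: "card ((\<lambda>u. c (u, k u)) ` N v) \<le> d v"
          unfolding d_def by (rule card_image_le[OF finN])
        have "\<exists>j. j \<le> d v \<and> c (v,j) \<notin> (\<lambda>u. c (u, k u)) ` N v"
        proof (rule ccontr)
          assume "\<not> ?thesis"
          then have "(\<lambda>j. c (v,j)) ` {0..d v} \<subseteq> (\<lambda>u. c (u, k u)) ` N v" by auto
          then have "card ((\<lambda>j. c (v,j)) ` {0..d v}) \<le> card ((\<lambda>u. c (u, k u)) ` N v)"
            using finN by (intro card_mono) auto
          then show False using c1 c2 by simp
        qed
        then obtain j where j: "j \<le> d v" "c (v,j) \<notin> (\<lambda>u. c (u, k u)) ` N v" by blast
        define k' where "k' = k(v := j)"
        have diff: "c (w, k w) \<noteq> c (v, j)" if "w \<in> V" "g w < t" for w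
        proof (cases "E w v")
          case True
          have "(w, k w) \<in> W" unfolding W_def using that kb by auto
          moreover have "(v, j) \<in> W" unfolding W_def using vV j by auto
          ultimately have "F (w, k w) (v, j)" unfolding F_def using True by simp
          then show ?thesis using pc \<open>(w, k w) \<in> W\<close> \<open>(v, j) \<in> W\<close>
            unfolding proper_coloring_def by blast
        next
          case False
          then have "w \<in> N v" unfolding N_def using that gv by auto
          then have "c (w, k w) \<in> (\<lambda>u. c (u, k u)) ` N v" by (rule imageI)
          then show ?thesis using j(2) by metis
        qed
        have sub: "g w < t" if "w \<in> V" "g w < Suc t" "w \<noteq> v" for w
        proof -
          have "g w \<noteq> g v" using inj_onD[OF ginj _ that(1) vV] that(3) by blast
          then show ?thesis using that(2) gv by simp
        qed
        have "\<forall>w\<in>V. g w < Suc t \<longrightarrow> k' w \<le> d w"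
          using kb sub j(1) unfolding k'_def by auto
        moreover have "inj_on (\<lambda>w. c (w, k' w)) {w\<in>V. g w < Suc t}"
        proof (rule inj_onI)
          fix x y assume x: "x \<in> {w\<in>V. g w < Suc t}" and y: "y \<in> {w\<in>V. g w < Suc t}"
            and eq: "c (x, k' x) = c (y, k' y)"
          show "x = y"
          proof (cases "x = v"; cases "y = v")
            assume "x = v" "y = v" then show ?thesis by simp
          next
            assume "x = v" "y \<noteq> v"
            have "g y < t" using sub[of y] y \<open>y \<noteq> v\<close> by simp
            then have "c (y, k y) \<noteq> c (v, j)" using diff[of y] y by simp
            moreover have "c (x, k' x) = c (v, j)" "c (y, k' y) = c (y, k y)"
              unfolding k'_def using \<open>x = v\<close> \<open>y \<noteq> v\<close> by simp_all
            ultimately show ?thesis using eq by simp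
          next
            assume "x \<noteq> v" "y = v"
            have "g x < t" using sub[of x] x \<open>x \<noteq> v\<close> by simp
            then have "c (x, k x) \<noteq> c (v, j)" using diff[of x] x by simp
            moreover have "c (y, k' y) = c (v, j)" "c (x, k' x) = c (x, k x)"
              unfolding k'_def using \<open>y = v\<close> \<open>x \<noteq> v\<close> by simp_all
            ultimately show ?thesis using eq by simp
          next
            assume "x \<noteq> v" "y \<noteq> v"
            then have "c (x, k x) = c (y, k y)" using eq unfolding k'_def by simp
            moreover have "x \<in> {w\<in>V. g w < t}" using sub[of x] x \<open>x \<noteq> v\<close> by simp
            moreover have "y \<in> {w\<in>V. g w < t}" using sub[of y] y \<open>y \<noteq> v\<close> by simp
            ultimately show ?thesis using inj_onD[OF ki] by blast
          qed
        qed
        ultimately show ?thesis by blast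
      qed
    qed
    obtain k where kb: "\<forall>v\<in>V. g v < card V \<longrightarrow> k v \<le> d v"
      and ki: "inj_on (\<lambda>v. c (v, k v)) {v\<in>V. g v < card V}" using step by blast
    have setV: "{v\<in>V. g v < card V} = V" using glt by auto
    define f where "f v = (v, k v)" for v
    have "f ` V \<subseteq> W" unfolding f_def W_def using kb glt by auto
    moreover have "inj_on f V" unfolding f_def by (auto intro: inj_onI)
    moreover have "\<forall>x\<in>V. \<forall>y\<in>V. E x y \<longleftrightarrow> F (f x) (f y)"
      using \<open>f ` V \<subseteq> W\<close> Eirr unfolding F_def f_def by auto
    ultimately have "induced_embedding V E W F f" unfolding induced_embedding_def by blast
    moreover have "inj_on (c \<circ> f) V" using ki setV unfolding f_def comp_def by simp
    ultimately show "\<exists>f. induced_embedding V E W F f \<and> inj_on (c \<circ> f) V" by blast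
  qed
  then show ?thesis using sgW cardW by blast
qed

theorem corollary2p2:
  fixes V :: "'a set" and E :: "'a \<Rightarrow> 'a \<Rightarrow> bool" and P :: "'a set set"
  assumes "simple_graph V E"
    and "partition_on V P"
    and "\<forall>B\<in>P. anticlique E B"
  shows "card V + card (block_pairs P) \<le> rho V E
       \<and> rho V E \<le> card V + card (non_edges V E)"
proof -
  obtain W :: "('a \<times> nat) set" and F where sgW: "simple_graph W F" and frW: "forces_rainbow V E W F"
    and cW: "card W \<le> card V + card (non_edges V E)"
    using upper[OF assms(1)] by blast
  have up: "rho V E \<le> card V + card (non_edges V E)"
    using rho_le[OF sgW frW] cW by simp
  have ex: "\<exists>(m::nat) (F::nat \<Rightarrow> nat \<Rightarrow> bool). simple_graph {0..<m} F \<and> forces_rainbow V E {0..<m} F"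
    using transport[OF sgW frW] by blast
  have "\<exists>F :: nat \<Rightarrow> nat \<Rightarrow> bool. simple_graph {0..<rho V E} F \<and> forces_rainbow V E {0..<rho V E} F"
    unfolding rho_def using LeastI_ex[OF ex] .
  then obtain F0 :: "nat \<Rightarrow> nat \<Rightarrow> bool" where sg0: "simple_graph {0..<rho V E} F0"
    and fr0: "forces_rainbow V E {0..<rho V E} F0" by blast
  have irr0: "\<forall>x. \<not> F0 x x" using sg0 unfolding simple_graph_def by blast
  have "card V + card (block_pairs P) \<le> card {0..<rho V E}"
    by (rule lower[OF assms finite_atLeastLessThan irr0 fr0])
  then show ?thesis using up by simp
qed

end
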